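(* Let $\mathbb{F}$ be a field, $n\ge4$, and let $g_1,g_2\in\mathrm{GL}_n(\mathbb{F})$ both have minimal polynomials of degree $2$. Then $\langle g_1,g_2\rangle$ does not act absolutely irreducibly on $\mathbb{F}^n$. *)

theory Defs
  imports "Jordan_Normal_Form.Matrix" "HOL-Algebra.Algebraic_Closure_Type"
begin

definition mat_poly_eval :: "nat \<Rightarrow> 'a::field poly \<Rightarrow> 'a mat \<Rightarrow> 'a mat" where
  "mat_poly_eval n p A =
     foldr (\<lambda>i M. coeff p i \<cdot>\<^sub>m (A ^\<^sub>m i) + M) [0..<Suc (degree p)] (0\<^sub>m n n)"

definition is_minimal_poly :: "nat \<Rightarrow> 'a::field mat \<Rightarrow> 'a poly \<Rightarrow> bool" where
  "is_minimal_poly n A p \<longleftrightarrow>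
     lead_coeff p = 1 \<and> mat_poly_eval n p A = 0\<^sub>m n n \<and>
     (\<forall>q. mat_poly_eval n q A = 0\<^sub>m n n \<longrightarrow> p dvd q)"

(* the minimal polynomial of A (exists and is unique for square A) *)
definition minimal_poly :: "nat \<Rightarrow> 'a::field mat \<Rightarrow> 'a poly" where
  "minimal_poly n A = (THE p. is_minimal_poly n A p)"

inductive_set gen_group :: "nat \<Rightarrow> 'a::field mat set \<Rightarrow> 'a mat set"
  for n :: nat and S :: "'a mat set" where
  gen_one: "1\<^sub>m n \<in> gen_group n S"
| gen_base: "A \<in> S \<Longrightarrow> A \<in> gen_group n S"
| gen_mult: "A \<in> gen_group n S \<Longrightarrow> B \<in> gen_group n S \<Longrightarrow> A * B \<in> gen_group n S"
| gen_inv: "A \<in> gen_group n S \<Longrightarrow> B \<in> carrier_mat n n \<Longrightarrow> A * B = 1\<^sub>m n \<Longrightarrow> B \<in> gen_group n S"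

definition is_subspace :: "nat \<Rightarrow> 'a::field vec set \<Rightarrow> bool" where
  "is_subspace n W \<longleftrightarrow> W \<subseteq> carrier_vec n \<and> 0\<^sub>v n \<in> W \<and>
     (\<forall>v\<in>W. \<forall>w\<in>W. v + w \<in> W) \<and> (\<forall>c. \<forall>v\<in>W. c \<cdot>\<^sub>v v \<in> W)"

definition acts_irreducibly :: "nat \<Rightarrow> 'a::field mat set \<Rightarrow> bool" where
  "acts_irreducibly n G \<longleftrightarrow> n > 0 \<and>
     (\<forall>W. is_subspace n W \<and> (\<forall>g\<in>G. \<forall>w\<in>W. g *\<^sub>v w \<in> W) \<longrightarrow>
        W = {0\<^sub>v n} \<or> W = carrier_vec n)"

definition acts_absolutely_irreducibly :: "nat \<Rightarrow> 'a::field mat set \<Rightarrow> bool" where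
  "acts_absolutely_irreducibly n G \<longleftrightarrow>
     acts_irreducibly n (map_mat to_ac ` G)"

end

theory Submission
  imports Defs "Jordan_Normal_Form.Char_Poly"
begin


lemma foldr_eval:
  assumes A: "A \<in> carrier_mat n n"
  shows "foldr (\<lambda>i M. coeff p i \<cdot>\<^sub>m (A ^\<^sub>m i) + M) xs (0\<^sub>m n n) \<in> carrier_mat n n \<and>
    (\<forall>a b. a < n \<longrightarrow> b < n \<longrightarrow> foldr (\<lambda>i M. coeff p i \<cdot>\<^sub>m (A ^\<^sub>m i) + M) xs (0\<^sub>m n n) $$ (a,b)
        = (\<Sum>i\<leftarrow>xs. coeff p i * (A ^\<^sub>m i) $$ (a,b)))"
  by (induction xs) (use A in auto)

lemma eval_carrier: "A \<in> carrier_mat n n \<Longrightarrow> mat_poly_eval n p A \<in> carrier_mat n n"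
  unfolding mat_poly_eval_def using foldr_eval by blast

lemma eval_entry:
  assumes A: "A \<in> carrier_mat n n" and K: "degree p < K" and ab: "a < n" "b < n"
  shows "mat_poly_eval n p A $$ (a,b) = (\<Sum>i<K. coeff p i * (A ^\<^sub>m i) $$ (a,b))"
proof -
  have "mat_poly_eval n p A $$ (a,b) = (\<Sum>i\<leftarrow>[0..<Suc (degree p)]. coeff p i * (A ^\<^sub>m i) $$ (a,b))"
    unfolding mat_poly_eval_def using foldr_eval[OF A] ab by blast
  also have "\<dots> = (\<Sum>i<Suc (degree p). coeff p i * (A ^\<^sub>m i) $$ (a,b))"
    by (simp add: interv_sum_list_conv_sum_set_nat lessThan_atLeast0)
  also have "\<dots> = (\<Sum>i<K. coeff p i * (A ^\<^sub>m i) $$ (a,b))"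
    by (rule sum.mono_neutral_left) (use K in \<open>auto simp: coeff_eq_0\<close>)
  finally show ?thesis .
qed

lemma eval_add:
  assumes A: "A \<in> carrier_mat n n"
  shows "mat_poly_eval n (p + q) A = mat_poly_eval n p A + mat_poly_eval n q A"
proof (rule eq_matI)
  show "dim_row (mat_poly_eval n (p + q) A) = dim_row (mat_poly_eval n p A + mat_poly_eval n q A)"
    using eval_carrier[OF A, of "p+q"] eval_carrier[OF A, of q] by simp
  show "dim_col (mat_poly_eval n (p + q) A) = dim_col (mat_poly_eval n p A + mat_poly_eval n q A)"
    using eval_carrier[OF A, of "p+q"] eval_carrier[OF A, of q] by simp
  let ?K = "Suc (max (degree p) (degree q))"
  fix a b assume ab: "a < dim_row (mat_poly_eval n p A + mat_poly_eval n q A)"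
     "b < dim_col (mat_poly_eval n p A + mat_poly_eval n q A)"
  then have ab': "a < n" "b < n" using eval_carrier[OF A, of q] by simp_all
  have dpq: "degree (p+q) < ?K" using degree_add_le_max[of p q] by linarith
  have "mat_poly_eval n (p + q) A $$ (a, b) = (\<Sum>i<?K. coeff (p+q) i * (A ^\<^sub>m i) $$ (a,b))"
    by (rule eval_entry[OF A dpq ab'])
  also have "\<dots> = (\<Sum>i<?K. coeff p i * (A ^\<^sub>m i) $$ (a,b)) + (\<Sum>i<?K. coeff q i * (A ^\<^sub>m i) $$ (a,b))"
    by (simp add: sum.distrib distrib_right)
  also have "\<dots> = mat_poly_eval n p A $$ (a, b) + mat_poly_eval n q A $$ (a, b)"
    using eval_entry[OF A _ ab', of p ?K] eval_entry[OF A _ ab', of q ?K] by simp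
  also have "\<dots> = (mat_poly_eval n p A + mat_poly_eval n q A) $$ (a, b)"
    using eval_carrier[OF A, of p] eval_carrier[OF A, of q] ab' by simp
  finally show "mat_poly_eval n (p + q) A $$ (a, b) = (mat_poly_eval n p A + mat_poly_eval n q A) $$ (a, b)" .
qed

lemma eval_smult:
  assumes A: "A \<in> carrier_mat n n"
  shows "mat_poly_eval n (smult c p) A = c \<cdot>\<^sub>m mat_poly_eval n p A"
proof (rule eq_matI)
  show "dim_row (mat_poly_eval n (smult c p) A) = dim_row (c \<cdot>\<^sub>m mat_poly_eval n p A)"
    using eval_carrier[OF A, of "smult c p"] eval_carrier[OF A, of p] by simp
  show "dim_col (mat_poly_eval n (smult c p) A) = dim_col (c \<cdot>\<^sub>m mat_poly_eval n p A)"
    using eval_carrier[OF A, of "smult c p"] eval_carrier[OF A, of p] by simp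
  fix a b assume ab: "a < dim_row (c \<cdot>\<^sub>m mat_poly_eval n p A)"
     "b < dim_col (c \<cdot>\<^sub>m mat_poly_eval n p A)"
  then have ab': "a < n" "b < n" using eval_carrier[OF A, of p] by simp_all
  have d: "degree (smult c p) < Suc (degree p)" by (simp add: degree_smult_le le_imp_less_Suc)
  have "mat_poly_eval n (smult c p) A $$ (a, b) = (\<Sum>i<Suc (degree p). coeff (smult c p) i * (A ^\<^sub>m i) $$ (a,b))"
    by (rule eval_entry[OF A d ab'])
  also have "\<dots> = c * (\<Sum>i<Suc (degree p). coeff p i * (A ^\<^sub>m i) $$ (a,b))"
    by (simp only: coeff_smult sum_distrib_left mult.assoc)
  also have "\<dots> = c * mat_poly_eval n p A $$ (a, b)"
    using eval_entry[OF A _ ab', of p "Suc (degree p)"] by simp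
  also have "\<dots> = (c \<cdot>\<^sub>m mat_poly_eval n p A) $$ (a, b)"
    using eval_carrier[OF A, of p] ab' by simp
  finally show "mat_poly_eval n (smult c p) A $$ (a, b) = (c \<cdot>\<^sub>m mat_poly_eval n p A) $$ (a, b)" .
qed

lemma eval_shift:
  assumes A: "A \<in> carrier_mat n n"
  shows "mat_poly_eval n (pCons 0 p) A = mat_poly_eval n p A * A"
proof (rule eq_matI)
  show "dim_row (mat_poly_eval n (pCons 0 p) A) = dim_row (mat_poly_eval n p A * A)"
    using eval_carrier[OF A, of "pCons 0 p"] eval_carrier[OF A, of p] by simp
  show "dim_col (mat_poly_eval n (pCons 0 p) A) = dim_col (mat_poly_eval n p A * A)"
    using eval_carrier[OF A, of "pCons 0 p"] A by simp
  let ?K = "Suc (degree p)"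
  fix a b assume ab: "a < dim_row (mat_poly_eval n p A * A)"
     "b < dim_col (mat_poly_eval n p A * A)"
  then have ab': "a < n" "b < n" using eval_carrier[OF A, of p] A by simp_all
  have d: "degree (pCons 0 p) < Suc ?K" by (simp add: degree_pCons_le le_imp_less_Suc)
  have "mat_poly_eval n (pCons 0 p) A $$ (a, b) = (\<Sum>i<Suc ?K. coeff (pCons 0 p) i * (A ^\<^sub>m i) $$ (a,b))"
    by (rule eval_entry[OF A d ab'])
  also have "\<dots> = (\<Sum>i<?K. coeff p i * (A ^\<^sub>m Suc i) $$ (a,b))"
    by (subst sum.lessThan_Suc_shift) simp
  also have "\<dots> = (\<Sum>i<?K. coeff p i * (\<Sum>k<n. (A ^\<^sub>m i) $$ (a,k) * A $$ (k,b)))"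
  proof (rule sum.cong[OF refl])
    fix i
    have "(A ^\<^sub>m Suc i) $$ (a,b) = (A ^\<^sub>m i * A) $$ (a,b)" by simp
    also have "\<dots> = (\<Sum>k<n. (A ^\<^sub>m i) $$ (a,k) * A $$ (k,b))"
      using A ab' by (simp add: scalar_prod_def lessThan_atLeast0)
    finally show "coeff p i * (A ^\<^sub>m Suc i) $$ (a,b) = coeff p i * (\<Sum>k<n. (A ^\<^sub>m i) $$ (a,k) * A $$ (k,b))"
      by simp
  qed
  also have "\<dots> = (\<Sum>i<?K. \<Sum>k<n. coeff p i * (A ^\<^sub>m i) $$ (a,k) * A $$ (k,b))"
    by (simp only: sum_distrib_left mult.assoc)
  also have "\<dots> = (\<Sum>k<n. \<Sum>i<?K. coeff p i * (A ^\<^sub>m i) $$ (a,k) * A $$ (k,b))"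
    by (rule sum.swap)
  also have "\<dots> = (\<Sum>k<n. (\<Sum>i<?K. coeff p i * (A ^\<^sub>m i) $$ (a,k)) * A $$ (k,b))"
    by (simp only: sum_distrib_right)
  also have "\<dots> = (\<Sum>k<n. mat_poly_eval n p A $$ (a,k) * A $$ (k,b))"
  proof (rule sum.cong[OF refl])
    fix k assume "k \<in> {..<n}"
    then have "k < n" by simp
    then show "(\<Sum>i<?K. coeff p i * (A ^\<^sub>m i) $$ (a,k)) * A $$ (k,b) = mat_poly_eval n p A $$ (a,k) * A $$ (k,b)"
      using eval_entry[OF A _ ab'(1), of p ?K k] by simp
  qed
  also have "\<dots> = (mat_poly_eval n p A * A) $$ (a,b)"
    using A ab' eval_carrier[OF A, of p] by (simp add: scalar_prod_def lessThan_atLeast0)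
  finally show "mat_poly_eval n (pCons 0 p) A $$ (a, b) = (mat_poly_eval n p A * A) $$ (a, b)" .
qed

lemma mat_eqI_n:
  assumes "A \<in> carrier_mat n n" "B \<in> carrier_mat n n"
    and "\<And>a b. a < n \<Longrightarrow> b < n \<Longrightarrow> A $$ (a,b) = B $$ (a,b)"
  shows "A = B"
proof (rule eq_matI)
  show "dim_row A = dim_row B" "dim_col A = dim_col B" using assms(1,2) by simp_all
  fix a b assume "a < dim_row B" "b < dim_col B"
  then show "A $$ (a,b) = B $$ (a,b)" using assms by simp
qed

lemma annihilator_exists:
  fixes A :: "'a::field mat"
  assumes A: "A \<in> carrier_mat n n"
  shows "\<exists>q. q \<noteq> 0 \<and> mat_poly_eval n q A = 0\<^sub>m n n"
proof -
  define N where "N = n*n+1"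
  define cv where "cv i = vec N (\<lambda>j. (A ^\<^sub>m j) $$ (i div n, i mod n))" for i
  define Km where "Km = mat\<^sub>r N N (\<lambda>i. if i = n*n then 0\<^sub>v N else cv i)"
  have "det Km = 0" unfolding Km_def
    by (rule det_row_0) (simp_all add: N_def cv_def Pi_def)
  note dK = this
  have Kc: "Km \<in> carrier_mat N N" unfolding Km_def by (intro carrier_matI dim_row_mat(2) dim_col_mat(2))
  have "\<exists>v. v \<in> carrier_vec N \<and> v \<noteq> 0\<^sub>v N \<and> Km *\<^sub>v v = 0\<^sub>v N"
    by (rule iffD1[OF det_0_iff_vec_prod_zero_field[OF Kc] dK])
  then obtain c where c: "c \<in> carrier_vec N" "c \<noteq> 0\<^sub>v N" "Km *\<^sub>v c = 0\<^sub>v N"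
    by blast
  define q where "q = (\<Sum>j<N. monom (c $ j) j)"
  have cq: "coeff q i = (if i < N then c $ i else 0)" for i
    unfolding q_def by (simp add: coeff_sum coeff_monom)
  have "q \<noteq> 0"
  proof
    assume "q = 0"
    have "c $ i = 0" if "i < N" for i using cq[of i] that \<open>q = 0\<close> by simp
    then have "c = 0\<^sub>v N" using c(1) by (intro eq_vecI) simp_all
    then show False using c(2) by simp
  qed
  moreover have dq: "degree q < N"
  proof -
    have "degree q \<le> n*n" by (rule degree_le) (simp add: cq N_def)
    then show ?thesis by (simp add: N_def)
  qed
  have "mat_poly_eval n q A = 0\<^sub>m n n"
  proof (rule mat_eqI_n[OF eval_carrier[OF A, of q] zero_carrier_mat])
    fix a b assume ab': "a < n" "b < n"
    define r where "r = a * n + b"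
    have r1: "r < n*n"
    proof -
      have "a * n + b < a * n + n" using ab' by simp
      also have "\<dots> = Suc a * n" by simp
      also have "\<dots> \<le> n * n" using ab' by (intro mult_le_mono1) simp
      finally show ?thesis unfolding r_def .
    qed
    have r: "r < n*n" "r div n = a" "r mod n = b" using r1 ab' unfolding r_def by auto
    have rN: "r < N" using r by (simp add: N_def)
    have "0 = (Km *\<^sub>v c) $ r" using c(3) rN by simp
    also have "\<dots> = row Km r \<bullet> c" using rN Kc by simp
    also have "row Km r = cv r" unfolding Km_def using rN r(1) by (simp add: cv_def)
    also have "cv r \<bullet> c = (\<Sum>j<N. cv r $ j * c $ j)"
      using c(1) by (simp add: scalar_prod_def lessThan_atLeast0)
    also have "\<dots> = (\<Sum>j<N. coeff q j * (A ^\<^sub>m j) $$ (a,b))"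
      by (rule sum.cong[OF refl]) (simp add: cv_def r cq)
    also have "\<dots> = mat_poly_eval n q A $$ (a,b)"
      by (rule eval_entry[OF A dq ab', symmetric])
    finally show "mat_poly_eval n q A $$ (a, b) = 0\<^sub>m n n $$ (a, b)" using ab' by simp
  qed
  ultimately show ?thesis by blast
qed


lemma eval_zero_poly:
  assumes A: "A \<in> carrier_mat n n"
  shows "mat_poly_eval n 0 A = 0\<^sub>m n n"
proof (rule mat_eqI_n[OF eval_carrier[OF A, of 0] zero_carrier_mat])
  fix a b assume ab: "a < n" "b < n"
  show "mat_poly_eval n 0 A $$ (a, b) = 0\<^sub>m n n $$ (a, b)"
    using eval_entry[OF A _ ab, of 0 1] ab by simp
qed

lemma eval_mult_zero:
  assumes A: "A \<in> carrier_mat n n" and p: "mat_poly_eval n p A = 0\<^sub>m n n"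
  shows "mat_poly_eval n (p * s) A = 0\<^sub>m n n"
proof (induction s)
  case 0
  then show ?case using eval_zero_poly[OF A] by simp
next
  case (pCons a s)
  have "mat_poly_eval n (p * pCons a s) A = a \<cdot>\<^sub>m mat_poly_eval n p A + mat_poly_eval n (p * s) A * A"
    by (simp add: mult_pCons_right eval_add[OF A] eval_smult[OF A] eval_shift[OF A])
  also have "\<dots> = 0\<^sub>m n n" using pCons(2) p A by simp
  finally show ?case .
qed

lemma minimal_poly_exists:
  fixes A :: "'a::field mat"
  assumes A: "A \<in> carrier_mat n n"
  shows "is_minimal_poly n A (minimal_poly n A)"
proof -
  define S where "S = {q. q \<noteq> 0 \<and> mat_poly_eval n q A = 0\<^sub>m n n}"
  have "\<exists>q. q \<in> S" using annihilator_exists[OF A] unfolding S_def by blast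
  define d where "d = (LEAST d. \<exists>q\<in>S. degree q = d)"
  have "\<exists>q\<in>S. degree q = d" unfolding d_def by (rule LeastI_ex) (use \<open>\<exists>q. q \<in> S\<close> in blast)
  then obtain p0 where p0: "p0 \<in> S" "degree p0 = d" by blast
  have dmin: "degree q \<ge> d" if "q \<in> S" for q unfolding d_def
    by (rule Least_le) (use that in blast)
  define pm where "pm = smult (inverse (lead_coeff p0)) p0"
  have p00: "p0 \<noteq> 0" and ep0: "mat_poly_eval n p0 A = 0\<^sub>m n n" using p0 unfolding S_def by auto
  have lpm: "lead_coeff pm = 1" unfolding pm_def using p00 by (simp add: lead_coeff_smult)
  have pm0: "pm \<noteq> 0" using lpm by auto
  have "lead_coeff p0 \<noteq> 0" using p00 by simp
  then have dpm: "degree pm = d" unfolding pm_def using p0(2) by (simp add: degree_smult_eq)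
  have epm: "mat_poly_eval n pm A = 0\<^sub>m n n" unfolding pm_def eval_smult[OF A] ep0 by simp
  have dvd: "pm dvd q" if q: "mat_poly_eval n q A = 0\<^sub>m n n" for q
  proof (rule ccontr)
    assume nd: "\<not> pm dvd q"
    define r where "r = q mod pm"
    have r0: "r \<noteq> 0" using nd unfolding r_def by (simp add: mod_eq_0_iff_dvd)
    have "r = q - q div pm * pm" unfolding r_def by (simp add: minus_div_mult_eq_mod)
    also have "\<dots> = q + smult (-1) (pm * (q div pm))" by (simp add: mult.commute)
    finally have rq: "r = q + smult (-1) (pm * (q div pm))" .
    have "mat_poly_eval n r A = mat_poly_eval n q A + (-1) \<cdot>\<^sub>m mat_poly_eval n (pm * (q div pm)) A"
      by (simp only: rq eval_add[OF A] eval_smult[OF A])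
    also have "\<dots> = 0\<^sub>m n n" using q eval_mult_zero[OF A epm, of "q div pm"] by simp
    finally have "mat_poly_eval n r A = 0\<^sub>m n n" .
    then have "r \<in> S" using r0 unfolding S_def by auto
    then have "degree r \<ge> d" by (rule dmin)
    moreover have "degree r < degree pm" unfolding r_def by (rule degree_mod_less_degree[OF pm0 nd])
    ultimately show False using dpm by simp
  qed
  have mp: "is_minimal_poly n A pm" unfolding is_minimal_poly_def using lpm epm dvd by blast
  have "minimal_poly n A = pm" unfolding minimal_poly_def
  proof (rule the_equality)
    show "is_minimal_poly n A pm" by (rule mp)
    fix p' assume "is_minimal_poly n A p'"
    then have "lead_coeff p' = 1" "p' dvd pm" "pm dvd p'" using epm dvd unfolding is_minimal_poly_def by auto
    then show "p' = pm" using lpm by (intro poly_dvd_antisym) simp_all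
  qed
  then show ?thesis using mp by simp
qed


lemma inv_obtain:
  assumes A: "A \<in> carrier_mat n n" and inv: "invertible_mat A"
  obtains B where "B \<in> carrier_mat n n" "A * B = 1\<^sub>m n" "B * A = 1\<^sub>m n"
proof -
  obtain B where AB: "A * B = 1\<^sub>m (dim_row A)" "B * A = 1\<^sub>m (dim_row B)"
    using inv unfolding invertible_mat_def inverts_mat_def by blast
  have "dim_col (A * B) = dim_col B" by simp
  then have cB: "dim_col B = n" using AB(1) A by simp
  have "dim_col (B * A) = n" using A by simp
  then have rB: "dim_row B = n" using AB(2) by simp
  show ?thesis
  proof (rule that[of B])
    show "B \<in> carrier_mat n n" by (rule carrier_matI[OF rB cB])
    have "dim_row A = n" using A by simp
    then show "A * B = 1\<^sub>m n" using AB(1) by simp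
    show "B * A = 1\<^sub>m n" using AB(2) rB by simp
  qed
qed

lemma aux3: "(0::'a::comm_ring_1) = u + v + x \<Longrightarrow> x = - v - u"
proof -
  assume h: "0 = u + v + x"
  have "x = (u + v + x) - v - u" by simp
  also have "\<dots> = - v - u" using h by simp
  finally show ?thesis .
qed

lemma quad_rel:
  fixes g :: "'a::field mat"
  assumes g: "g \<in> carrier_mat n n" and inv: "invertible_mat g"
    and d: "degree (minimal_poly n g) = 2"
  shows "\<exists>c1 c0. c0 \<noteq> 0 \<and> g * g = c1 \<cdot>\<^sub>m g + c0 \<cdot>\<^sub>m 1\<^sub>m n"
proof -
  define p where "p = minimal_poly n g"
  have mp: "is_minimal_poly n g p" unfolding p_def by (rule minimal_poly_exists[OF g])
  have l: "coeff p (Suc (Suc 0)) = 1" using mp d unfolding is_minimal_poly_def p_def by (simp add: numeral_2_eq_2)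
  have ep: "mat_poly_eval n p g = 0\<^sub>m n n" and dv: "\<And>q. mat_poly_eval n q g = 0\<^sub>m n n \<Longrightarrow> p dvd q"
    using mp unfolding is_minimal_poly_def by auto
  have dp: "degree p < 3" using d unfolding p_def by simp
  have pw: "g ^\<^sub>m 0 = 1\<^sub>m n" "g ^\<^sub>m Suc 0 = g" "g ^\<^sub>m Suc (Suc 0) = g * g"
    using g by auto
  have rel: "g * g = (- coeff p 1) \<cdot>\<^sub>m g + (- coeff p 0) \<cdot>\<^sub>m 1\<^sub>m n"
  proof (rule mat_eqI_n)
    show "g * g \<in> carrier_mat n n" using g by simp
    show "(- coeff p 1) \<cdot>\<^sub>m g + (- coeff p 0) \<cdot>\<^sub>m 1\<^sub>m n \<in> carrier_mat n n" using g by simp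
    fix a b assume ab: "a < n" "b < n"
    have "0 = mat_poly_eval n p g $$ (a,b)" using ep ab by simp
    also have "\<dots> = (\<Sum>i<3. coeff p i * (g ^\<^sub>m i) $$ (a,b))" by (rule eval_entry[OF g dp ab])
    also have "\<dots> = coeff p 0 * (1\<^sub>m n) $$ (a,b) + coeff p 1 * g $$ (a,b) + (g * g) $$ (a,b)"
      by (simp add: numeral_3_eq_3 pw l del: pow_mat.simps index_mult_mat)
    finally have "(g * g) $$ (a, b) = - (coeff p 1 * g $$ (a,b)) - coeff p 0 * (1\<^sub>m n) $$ (a,b)"
      by (rule aux3)
    then show "(g * g) $$ (a, b) = ((- coeff p 1) \<cdot>\<^sub>m g + (- coeff p 0) \<cdot>\<^sub>m 1\<^sub>m n) $$ (a, b)"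
      using ab g by (simp del: index_mult_mat)
  qed
  have c0: "coeff p 0 \<noteq> 0"
  proof
    assume z: "coeff p 0 = 0"
    obtain B where B: "B \<in> carrier_mat n n" "g * B = 1\<^sub>m n" "B * g = 1\<^sub>m n" using inv_obtain[OF g inv] by blast
    let ?c = "- coeff p 1"
    have "?c \<cdot>\<^sub>m g + 0 \<cdot>\<^sub>m 1\<^sub>m n = ?c \<cdot>\<^sub>m g"
      by (rule mat_eqI_n[where n=n]) (use g in simp_all)
    then have gg: "g * g = ?c \<cdot>\<^sub>m g" using rel z by simp
    have "g = (B * g) * g" using B g by simp
    also have "\<dots> = B * (g * g)" using assoc_mult_mat[OF B(1) g g] by simp
    also have "\<dots> = ?c \<cdot>\<^sub>m 1\<^sub>m n" using mult_smult_distrib[OF B(1) g] B(3) gg by simp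
    finally have gc: "g = ?c \<cdot>\<^sub>m 1\<^sub>m n" .
    define q where "q = [: - ?c, 1 :]"
    have "mat_poly_eval n q g = 0\<^sub>m n n"
    proof (rule mat_eqI_n[OF eval_carrier[OF g, of q] zero_carrier_mat])
      fix a b assume ab: "a < n" "b < n"
      have dq: "degree q < 2" unfolding q_def by simp
      have "mat_poly_eval n q g $$ (a,b) = (\<Sum>i<2. coeff q i * (g ^\<^sub>m i) $$ (a,b))"
        by (rule eval_entry[OF g dq ab])
      also have "\<dots> = - ?c * (1\<^sub>m n) $$ (a,b) + g $$ (a,b)"
        by (simp add: numeral_2_eq_2 pw q_def del: pow_mat.simps)
      also have "\<dots> = 0" using ab by (subst gc) simp
      finally show "mat_poly_eval n q g $$ (a, b) = 0\<^sub>m n n $$ (a, b)" using ab by simp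
    qed
    then have "p dvd q" by (rule dv)
    moreover have "q \<noteq> 0" unfolding q_def by simp
    ultimately have "degree p \<le> degree q" by (rule dvd_imp_degree_le)
    then show False using d unfolding p_def q_def by simp
  qed
  show ?thesis by (intro exI[of _ "- coeff p 1"] exI[of _ "- coeff p 0"]) (simp add: c0 rel)
qed



lemma smult_mat_vec:
  assumes A: "A \<in> carrier_mat nr nc" and v: "v \<in> carrier_vec nc"
  shows "(k \<cdot>\<^sub>m A) *\<^sub>v v = k \<cdot>\<^sub>v (A *\<^sub>v v)"
proof (rule eq_vecI)
  show "dim_vec ((k \<cdot>\<^sub>m A) *\<^sub>v v) = dim_vec (k \<cdot>\<^sub>v (A *\<^sub>v v))" by simp
  fix i assume "i < dim_vec (k \<cdot>\<^sub>v (A *\<^sub>v v))"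
  then have i: "i < nr" using A by simp
  have "((k \<cdot>\<^sub>m A) *\<^sub>v v) $ i = row (k \<cdot>\<^sub>m A) i \<bullet> v" using i A by simp
  also have "\<dots> = (\<Sum>j<nc. k * A $$ (i,j) * v $ j)" using i A v by (simp add: scalar_prod_def lessThan_atLeast0)
  also have "\<dots> = k * (\<Sum>j<nc. A $$ (i,j) * v $ j)" by (simp add: sum_distrib_left mult.assoc)
  also have "\<dots> = (k \<cdot>\<^sub>v (A *\<^sub>v v)) $ i" using i A v by (simp add: scalar_prod_def lessThan_atLeast0)
  finally show "((k \<cdot>\<^sub>m A) *\<^sub>v v) $ i = (k \<cdot>\<^sub>v (A *\<^sub>v v)) $ i" .
qed


lemma common_eigvec:
  fixes x y :: "'b::alg_closed_field mat"
  assumes x: "x \<in> carrier_mat n n" and y: "y \<in> carrier_mat n n" and n: "n > 0"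
    and Qx: "\<And>w. w \<in> carrier_vec n \<Longrightarrow> x *\<^sub>v (x *\<^sub>v w) = \<alpha> \<cdot>\<^sub>v (x *\<^sub>v w) + \<beta> \<cdot>\<^sub>v w"
    and Qy: "\<And>w. w \<in> carrier_vec n \<Longrightarrow> y *\<^sub>v (y *\<^sub>v w) = \<gamma> \<cdot>\<^sub>v (y *\<^sub>v w) + \<delta> \<cdot>\<^sub>v w"
  shows "\<exists>v l c1 c2. v \<in> carrier_vec n \<and> v \<noteq> 0\<^sub>v n \<and> x *\<^sub>v v = l \<cdot>\<^sub>v v \<and>
           x *\<^sub>v (y *\<^sub>v v) = c1 \<cdot>\<^sub>v v + c2 \<cdot>\<^sub>v (y *\<^sub>v v)"
proof -
  note vs = mult_add_distrib_mat_vec[where nr=n and nc=n] mult_minus_distrib_mat_vec[where nr=n and nc=n]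
    mult_mat_vec[where nr=n and nc=n] minus_mult_distrib_mat_vec[where nr=n and nc=n]
    add_mult_distrib_mat_vec[where nr=n and nc=n] assoc_mult_mat_vec[of _ n n _ n] smult_mat_vec[where nr=n and nc=n]
  define z where "z = x * y + y * x - \<alpha> \<cdot>\<^sub>m y - \<gamma> \<cdot>\<^sub>m x"
  have zc: "z \<in> carrier_mat n n" unfolding z_def using x y by (simp add: minus_carrier_mat)
  have zv: "z *\<^sub>v u = x *\<^sub>v (y *\<^sub>v u) + y *\<^sub>v (x *\<^sub>v u) - \<alpha> \<cdot>\<^sub>v (y *\<^sub>v u) - \<gamma> \<cdot>\<^sub>v (x *\<^sub>v u)"
    if u: "u \<in> carrier_vec n" for u
    unfolding z_def using x y u
    by (simp add: vs minus_carrier_mat)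
  have comm: "z *\<^sub>v (x *\<^sub>v w) = x *\<^sub>v (z *\<^sub>v w)" if w: "w \<in> carrier_vec n" for w
  proof -
    have xw: "x *\<^sub>v w \<in> carrier_vec n" using x w by simp
    have L: "z *\<^sub>v (x *\<^sub>v w) = x *\<^sub>v (y *\<^sub>v (x *\<^sub>v w)) + (\<alpha> \<cdot>\<^sub>v (y *\<^sub>v (x *\<^sub>v w)) + \<beta> \<cdot>\<^sub>v (y *\<^sub>v w))
       - \<alpha> \<cdot>\<^sub>v (y *\<^sub>v (x *\<^sub>v w)) - \<gamma> \<cdot>\<^sub>v (\<alpha> \<cdot>\<^sub>v (x *\<^sub>v w) + \<beta> \<cdot>\<^sub>v w)"
      unfolding zv[OF xw] Qx[OF w] using x y w
      by (simp add: vs)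
    have R: "x *\<^sub>v (z *\<^sub>v w) = (\<alpha> \<cdot>\<^sub>v (x *\<^sub>v (y *\<^sub>v w)) + \<beta> \<cdot>\<^sub>v (y *\<^sub>v w)) + x *\<^sub>v (y *\<^sub>v (x *\<^sub>v w))
       - \<alpha> \<cdot>\<^sub>v (x *\<^sub>v (y *\<^sub>v w)) - \<gamma> \<cdot>\<^sub>v (\<alpha> \<cdot>\<^sub>v (x *\<^sub>v w) + \<beta> \<cdot>\<^sub>v w)"
      unfolding zv[OF w] using x y w
      by (simp add: vs Qx)
    show ?thesis unfolding L R
      by (rule eq_vecI) (use x y w in \<open>simp_all add: algebra_simps\<close>)
  qed
  have "degree (char_poly z) = n" using degree_monic_char_poly[OF zc] by simp
  then obtain \<mu> where "poly (char_poly z) \<mu> = 0" using n alg_closed_imp_poly_has_root by force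
  then have "eigenvalue z \<mu>" using eigenvalue_root_char_poly[OF zc] by simp
  then obtain w where "eigenvector z w \<mu>" unfolding eigenvalue_def by blast
  then have w: "w \<in> carrier_vec n" "w \<noteq> 0\<^sub>v n" "z *\<^sub>v w = \<mu> \<cdot>\<^sub>v w"
    unfolding eigenvector_def using zc by auto
  have "degree [:-\<beta>, -\<alpha>, 1:] > 0" by simp
  then obtain l1 where "poly [:-\<beta>, -\<alpha>, 1:] l1 = 0" using alg_closed_imp_poly_has_root by blast
  then have beta: "\<beta> = l1 * l1 - \<alpha> * l1" by (simp add: algebra_simps)
  define l2 where "l2 = \<alpha> - l1"
  define u0 where "u0 = x *\<^sub>v w - l2 \<cdot>\<^sub>v w"
  have u0c: "u0 \<in> carrier_vec n" unfolding u0_def using x w by simp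
  have xu0: "x *\<^sub>v u0 = l1 \<cdot>\<^sub>v u0"
  proof -
    have "x *\<^sub>v u0 = (\<alpha> \<cdot>\<^sub>v (x *\<^sub>v w) + \<beta> \<cdot>\<^sub>v w) - l2 \<cdot>\<^sub>v (x *\<^sub>v w)"
      unfolding u0_def using x w by (simp add: vs Qx)
    also have "\<dots> = l1 \<cdot>\<^sub>v u0"
      unfolding u0_def by (rule eq_vecI) (use x w in \<open>simp_all add: beta l2_def algebra_simps\<close>)
    finally show ?thesis .
  qed
  have zu0: "z *\<^sub>v u0 = \<mu> \<cdot>\<^sub>v u0"
  proof -
    have "z *\<^sub>v u0 = z *\<^sub>v (x *\<^sub>v w) - l2 \<cdot>\<^sub>v (z *\<^sub>v w)"
      unfolding u0_def using x w zc by (simp add: vs)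
    also have "\<dots> = x *\<^sub>v (\<mu> \<cdot>\<^sub>v w) - l2 \<cdot>\<^sub>v (\<mu> \<cdot>\<^sub>v w)" unfolding comm[OF w(1)] w(3) ..
    also have "\<dots> = \<mu> \<cdot>\<^sub>v u0"
      unfolding u0_def by (rule eq_vecI) (use x w in \<open>simp_all add: vs algebra_simps\<close>)
    finally show ?thesis .
  qed
  obtain v l where v: "v \<in> carrier_vec n" "v \<noteq> 0\<^sub>v n" "x *\<^sub>v v = l \<cdot>\<^sub>v v" "z *\<^sub>v v = \<mu> \<cdot>\<^sub>v v"
  proof (cases "u0 = 0\<^sub>v n")
    case False
    then show ?thesis using that[OF u0c False xu0 zu0] by simp
  next
    case True
    have "x *\<^sub>v w = l2 \<cdot>\<^sub>v w"
    proof (rule eq_vecI)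
      fix i assume "i < dim_vec (l2 \<cdot>\<^sub>v w)"
      then have i: "i < n" using w by simp
      have "u0 $ i = 0" using True i by simp
      then show "(x *\<^sub>v w) $ i = (l2 \<cdot>\<^sub>v w) $ i" unfolding u0_def using i x w by simp
    qed (use x w in simp)
    then show ?thesis using that[OF w(1) w(2) _ w(3)] by blast
  qed
  have yv: "y *\<^sub>v v \<in> carrier_vec n" using y v by simp
  have "z *\<^sub>v v = x *\<^sub>v (y *\<^sub>v v) + l \<cdot>\<^sub>v (y *\<^sub>v v) - \<alpha> \<cdot>\<^sub>v (y *\<^sub>v v) - (\<gamma> * l) \<cdot>\<^sub>v v"
    unfolding zv[OF v(1)] v(3) using y v by (simp add: vs smult_smult_assoc)
  then have H: "x *\<^sub>v (y *\<^sub>v v) + l \<cdot>\<^sub>v (y *\<^sub>v v) - \<alpha> \<cdot>\<^sub>v (y *\<^sub>v v) - (\<gamma> * l) \<cdot>\<^sub>v v = \<mu> \<cdot>\<^sub>v v"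
    using v(4) by simp
  have "x *\<^sub>v (y *\<^sub>v v) = (\<mu> + \<gamma> * l) \<cdot>\<^sub>v v + (\<alpha> - l) \<cdot>\<^sub>v (y *\<^sub>v v)"
  proof (rule eq_vecI)
    fix i assume "i < dim_vec ((\<mu> + \<gamma> * l) \<cdot>\<^sub>v v + (\<alpha> - l) \<cdot>\<^sub>v (y *\<^sub>v v))"
    then have i: "i < n" using v y by simp
    have "(x *\<^sub>v (y *\<^sub>v v) + l \<cdot>\<^sub>v (y *\<^sub>v v) - \<alpha> \<cdot>\<^sub>v (y *\<^sub>v v) - (\<gamma> * l) \<cdot>\<^sub>v v) $ i = (\<mu> \<cdot>\<^sub>v v) $ i"
      using H by simp
    then show "(x *\<^sub>v (y *\<^sub>v v)) $ i = ((\<mu> + \<gamma> * l) \<cdot>\<^sub>v v + (\<alpha> - l) \<cdot>\<^sub>v (y *\<^sub>v v)) $ i"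
      using i x y v by (simp add: algebra_simps)
  qed (use x y v in simp)
  then show ?thesis using v by blast
qed



lemma rank_id1: "(s1*t2 - s2*t1)*(s0*a+t0*b) - (s0*t2-s2*t0)*(s1*a+t1*b) + (s0*t1-s1*t0)*(s2*a+t2*b) = (0::'b::comm_ring_1)"
  by (simp add: algebra_simps)
lemma rank_id2: "t1*(s0*a+t0*b) - t0*(s1*a+t1*b) = (s0*t1 - s1*t0)*(a::'b::comm_ring_1)"
  by (simp add: algebra_simps)
lemma rank_id3: "s1*(s0*a+t0*b) - s0*(s1*a+t1*b) = (s1*t0 - s0*t1)*(b::'b::comm_ring_1)"
  by (simp add: algebra_simps)

lemma rank_alg:
  fixes s0 s1 s2 t0 t1 t2 v0 v1 v2 u0 u1 u2 :: "'b::field"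
  assumes h: "s0*v0+t0*u0 = 1" "s0*v1+t0*u1 = 0" "s0*v2+t0*u2 = 0"
    "s1*v0+t1*u0 = 0" "s1*v1+t1*u1 = 1" "s1*v2+t1*u2 = 0"
    "s2*v0+t2*u0 = 0" "s2*v1+t2*u1 = 0" "s2*v2+t2*u2 = 1"
  shows False
proof -
  have d: "s0*t1-s1*t0 = 0"
    using rank_id1[of s1 t2 s2 t1 s0 v2 t0 u2] h by simp
  have "t1 = 0" using rank_id2[of t1 s0 v0 t0 u0 s1] h d by simp
  moreover have "t0 = 0" using rank_id2[of t1 s0 v1 t0 u1 s1] h d by simp
  moreover have "s1 = 0" using rank_id3[of s1 s0 v0 t0 u0 t1] h d by simp
  moreover have "s0 = 0" using rank_id3[of s1 s0 v1 t0 u1 t1] h d by simp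
  ultimately show False using h(1) by simp
qed

interpretation to_ac_hom: semiring_hom "to_ac :: 'a::field \<Rightarrow> 'a alg_closure"
  by unfold_locales simp_all


lemma map_quad_vec:
  fixes g :: "'a::field mat"
  assumes g: "g \<in> carrier_mat n n" and gg: "g * g = a \<cdot>\<^sub>m g + b \<cdot>\<^sub>m 1\<^sub>m n"
    and w: "w \<in> carrier_vec n"
  shows "map_mat to_ac g *\<^sub>v (map_mat to_ac g *\<^sub>v w) =
    to_ac a \<cdot>\<^sub>v (map_mat to_ac g *\<^sub>v w) + to_ac b \<cdot>\<^sub>v w"
proof -
  let ?x = "map_mat to_ac g"
  have xc: "?x \<in> carrier_mat n n" using g by simp
  have "?x * ?x = map_mat to_ac (g * g)" using to_ac_hom.mat_hom_mult[OF g g] by simp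
  also have "\<dots> = to_ac a \<cdot>\<^sub>m ?x + to_ac b \<cdot>\<^sub>m 1\<^sub>m n"
  proof (rule mat_eqI_n[where n=n])
    show "map_mat to_ac (g * g) \<in> carrier_mat n n" using g by simp
    show "to_ac a \<cdot>\<^sub>m ?x + to_ac b \<cdot>\<^sub>m 1\<^sub>m n \<in> carrier_mat n n" using xc by simp
    fix i j assume ij: "i < n" "j < n"
    have "map_mat to_ac (g * g) $$ (i,j) = to_ac ((a \<cdot>\<^sub>m g + b \<cdot>\<^sub>m 1\<^sub>m n) $$ (i,j))"
      using ij g by (simp only: gg) simp
    also have "\<dots> = (to_ac a \<cdot>\<^sub>m ?x + to_ac b \<cdot>\<^sub>m 1\<^sub>m n) $$ (i,j)"
      using ij g by simp
    finally show "map_mat to_ac (g * g) $$ (i,j) = (to_ac a \<cdot>\<^sub>m ?x + to_ac b \<cdot>\<^sub>m 1\<^sub>m n) $$ (i,j)" .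
  qed
  finally have xx: "?x * ?x = to_ac a \<cdot>\<^sub>m ?x + to_ac b \<cdot>\<^sub>m 1\<^sub>m n" .
  have "?x *\<^sub>v (?x *\<^sub>v w) = (?x * ?x) *\<^sub>v w" using assoc_mult_mat_vec[OF xc xc w] by simp
  also have "\<dots> = (to_ac a \<cdot>\<^sub>m ?x) *\<^sub>v w + (to_ac b \<cdot>\<^sub>m 1\<^sub>m n) *\<^sub>v w"
    unfolding xx by (rule add_mult_distrib_mat_vec[where nr=n and nc=n]) (use xc w in simp_all)
  also have "\<dots> = to_ac a \<cdot>\<^sub>v (?x *\<^sub>v w) + to_ac b \<cdot>\<^sub>v w"
    using smult_mat_vec[OF xc w] smult_mat_vec[OF one_carrier_mat w] w by simp
  finally show ?thesis .
qed

lemma inv_invariant: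
  fixes x C :: "'b::field mat"
  assumes x: "x \<in> carrier_mat n n" and C: "C \<in> carrier_mat n n" and Cx: "C * x = 1\<^sub>m n"
    and \<beta>: "\<beta> \<noteq> 0"
    and Q: "\<And>w. w \<in> carrier_vec n \<Longrightarrow> x *\<^sub>v (x *\<^sub>v w) = \<alpha> \<cdot>\<^sub>v (x *\<^sub>v w) + \<beta> \<cdot>\<^sub>v w"
    and sub: "is_subspace n W" and inv: "\<forall>w\<in>W. x *\<^sub>v w \<in> W" and wW: "w \<in> W"
  shows "C *\<^sub>v w \<in> W"
proof -
  have subs: "W \<subseteq> carrier_vec n" "\<And>v w. v \<in> W \<Longrightarrow> w \<in> W \<Longrightarrow> v + w \<in> W"
    "\<And>c v. v \<in> W \<Longrightarrow> c \<cdot>\<^sub>v v \<in> W"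
    using sub unfolding is_subspace_def by auto
  have w: "w \<in> carrier_vec n" using subs(1) wW by auto
  have CX: "C *\<^sub>v (x *\<^sub>v u) = u" if "u \<in> carrier_vec n" for u
  proof -
    have "C *\<^sub>v (x *\<^sub>v u) = (C * x) *\<^sub>v u" using assoc_mult_mat_vec[OF C x that] by simp
    then show ?thesis using Cx that by simp
  qed
  have xwc: "x *\<^sub>v w \<in> carrier_vec n" using x w by simp
  have "x *\<^sub>v w = C *\<^sub>v (x *\<^sub>v (x *\<^sub>v w))" using CX[OF xwc] by simp
  also have "\<dots> = C *\<^sub>v (\<alpha> \<cdot>\<^sub>v (x *\<^sub>v w)) + C *\<^sub>v (\<beta> \<cdot>\<^sub>v w)"
    unfolding Q[OF w] by (rule mult_add_distrib_mat_vec[OF C]) (use xwc w in simp_all)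
  also have "\<dots> = \<alpha> \<cdot>\<^sub>v w + \<beta> \<cdot>\<^sub>v (C *\<^sub>v w)"
    using mult_mat_vec[OF C xwc] mult_mat_vec[OF C w] CX[OF w] by simp
  finally have H: "x *\<^sub>v w = \<alpha> \<cdot>\<^sub>v w + \<beta> \<cdot>\<^sub>v (C *\<^sub>v w)" .
  have "C *\<^sub>v w = inverse \<beta> \<cdot>\<^sub>v (x *\<^sub>v w + (- \<alpha>) \<cdot>\<^sub>v w)"
  proof (rule eq_vecI)
    fix i assume "i < dim_vec (inverse \<beta> \<cdot>\<^sub>v (x *\<^sub>v w + (- \<alpha>) \<cdot>\<^sub>v w))"
    then have i: "i < n" using w by simp
    have "(x *\<^sub>v w) $ i = (\<alpha> \<cdot>\<^sub>v w + \<beta> \<cdot>\<^sub>v (C *\<^sub>v w)) $ i" using H by simp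
    then have "(x *\<^sub>v w) $ i = \<alpha> * w $ i + \<beta> * (C *\<^sub>v w) $ i" using i w C by simp
    then show "(C *\<^sub>v w) $ i = (inverse \<beta> \<cdot>\<^sub>v (x *\<^sub>v w + (- \<alpha>) \<cdot>\<^sub>v w)) $ i"
      using i w x \<beta> by (simp add: field_simps)
  qed (use C x w in simp)
  also have "\<dots> \<in> W" using subs(2,3) inv wW by blast
  finally show ?thesis .
qed


lemma inv_mult4:
  fixes A B C D :: "'b::field mat"
  assumes A: "A \<in> carrier_mat n n" and B: "B \<in> carrier_mat n n" and C: "C \<in> carrier_mat n n"
    and D: "D \<in> carrier_mat n n" and AC: "A * C = 1\<^sub>m n" and BD: "B * D = 1\<^sub>m n"
  shows "(A * B) * (D * C) = 1\<^sub>m n"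
proof -
  have "(A * B) * (D * C) = A * (B * (D * C))" using assoc_mult_mat[OF A B mult_carrier_mat[OF D C]] .
  also have "B * (D * C) = (B * D) * C" using assoc_mult_mat[OF B D C] by simp
  also have "\<dots> = C" using BD left_mult_one_mat[OF C] by simp
  finally show ?thesis using AC by simp
qed

lemma group_invariant:
  fixes S :: "'a::field mat set" and W :: "'a alg_closure vec set"
  assumes sub: "is_subspace n W"
    and gens: "\<And>g. g \<in> S \<Longrightarrow> g \<in> carrier_mat n n \<and> (\<exists>C\<in>carrier_mat n n. map_mat to_ac g * C = 1\<^sub>m n \<and>
       C * map_mat to_ac g = 1\<^sub>m n \<and> (\<forall>w\<in>W. map_mat to_ac g *\<^sub>v w \<in> W) \<and> (\<forall>w\<in>W. C *\<^sub>v w \<in> W))"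
    and A: "A \<in> gen_group n S"
  shows "A \<in> carrier_mat n n \<and> (\<exists>C\<in>carrier_mat n n. map_mat to_ac A * C = 1\<^sub>m n \<and>
       C * map_mat to_ac A = 1\<^sub>m n \<and> (\<forall>w\<in>W. map_mat to_ac A *\<^sub>v w \<in> W) \<and> (\<forall>w\<in>W. C *\<^sub>v w \<in> W))"
  using A
proof (induction rule: gen_group.induct)
  case gen_one
  have Wc: "W \<subseteq> carrier_vec n" using sub unfolding is_subspace_def by blast
  have "map_mat to_ac (1\<^sub>m n) = (1\<^sub>m n :: 'a alg_closure mat)" by (rule to_ac_hom.mat_hom_one)
  moreover have "\<forall>w\<in>W. (1\<^sub>m n :: 'a alg_closure mat) *\<^sub>v w \<in> W" using Wc by auto
  ultimately show ?case by (intro conjI one_carrier_mat bexI[of _ "1\<^sub>m n"]) simp_all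
next
  case (gen_base A)
  then show ?case by (rule gens)
next
  case (gen_mult A B)
  from gen_mult.IH(1) obtain CA where A: "A \<in> carrier_mat n n" and CA: "CA \<in> carrier_mat n n"
    "map_mat to_ac A * CA = 1\<^sub>m n" "CA * map_mat to_ac A = 1\<^sub>m n" "\<forall>w\<in>W. map_mat to_ac A *\<^sub>v w \<in> W"
    "\<forall>w\<in>W. CA *\<^sub>v w \<in> W" by blast
  from gen_mult.IH(2) obtain CB where B: "B \<in> carrier_mat n n" and CB: "CB \<in> carrier_mat n n"
    "map_mat to_ac B * CB = 1\<^sub>m n" "CB * map_mat to_ac B = 1\<^sub>m n" "\<forall>w\<in>W. map_mat to_ac B *\<^sub>v w \<in> W"
    "\<forall>w\<in>W. CB *\<^sub>v w \<in> W" by blast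
  have Wc: "W \<subseteq> carrier_vec n" using sub unfolding is_subspace_def by blast
  have MA: "map_mat to_ac A \<in> carrier_mat n n" and MB: "map_mat to_ac B \<in> carrier_mat n n" using A B by simp_all
  have M: "map_mat to_ac (A * B) = map_mat to_ac A * map_mat to_ac B" by (rule to_ac_hom.mat_hom_mult[OF A B])
  have 1: "map_mat to_ac (A * B) * (CB * CA) = 1\<^sub>m n" unfolding M by (rule inv_mult4[OF MA MB CA(1) CB(1) CA(2) CB(2)])
  have 2: "(CB * CA) * map_mat to_ac (A * B) = 1\<^sub>m n" unfolding M by (rule inv_mult4[OF CB(1) CA(1) MB MA CB(3) CA(3)])
  have 3: "\<forall>w\<in>W. map_mat to_ac (A * B) *\<^sub>v w \<in> W"
  proof
    fix w assume w: "w \<in> W"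
    then have "w \<in> carrier_vec n" using Wc by blast
    then have "map_mat to_ac (A * B) *\<^sub>v w = map_mat to_ac A *\<^sub>v (map_mat to_ac B *\<^sub>v w)"
      unfolding M by (rule assoc_mult_mat_vec[OF MA MB])
    then show "map_mat to_ac (A * B) *\<^sub>v w \<in> W" using w CA(4) CB(4) by simp
  qed
  have 4: "\<forall>w\<in>W. (CB * CA) *\<^sub>v w \<in> W"
  proof
    fix w assume w: "w \<in> W"
    then have "w \<in> carrier_vec n" using Wc by blast
    then have "(CB * CA) *\<^sub>v w = CB *\<^sub>v (CA *\<^sub>v w)"
      by (rule assoc_mult_mat_vec[OF CB(1) CA(1)])
    then show "(CB * CA) *\<^sub>v w \<in> W" using w CA(5) CB(5) by simp
  qed
  have "CB * CA \<in> carrier_mat n n" using CA(1) CB(1) by simp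
  then show ?case using mult_carrier_mat[OF A B] 1 2 3 4 by blast
next
  case (gen_inv A B)
  from gen_inv.IH obtain CA where A: "A \<in> carrier_mat n n" and CA: "CA \<in> carrier_mat n n"
    "map_mat to_ac A * CA = 1\<^sub>m n" "CA * map_mat to_ac A = 1\<^sub>m n" "\<forall>w\<in>W. map_mat to_ac A *\<^sub>v w \<in> W"
    "\<forall>w\<in>W. CA *\<^sub>v w \<in> W" by blast
  have B: "B \<in> carrier_mat n n" by fact
  have MA: "map_mat to_ac A \<in> carrier_mat n n" and MB: "map_mat to_ac B \<in> carrier_mat n n" using A B by simp_all
  have AB: "map_mat to_ac A * map_mat to_ac B = 1\<^sub>m n"
    using to_ac_hom.mat_hom_mult[OF A B] gen_inv.hyps(3) to_ac_hom.mat_hom_one by metis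
  have "CA = CA * (map_mat to_ac A * map_mat to_ac B)" using AB CA(1) by simp
  also have "\<dots> = (CA * map_mat to_ac A) * map_mat to_ac B" using CA(1) MA MB by (simp add: assoc_mult_mat)
  also have "\<dots> = map_mat to_ac B" using CA(3) MB by simp
  finally have CAB: "CA = map_mat to_ac B" .
  show ?case using B MA AB CA CAB by blast
qed

lemma span2_subspace:
  fixes v u :: "'b::field vec"
  assumes v: "v \<in> carrier_vec n" and u: "u \<in> carrier_vec n"
  shows "is_subspace n {s \<cdot>\<^sub>v v + t \<cdot>\<^sub>v u | s t. True}"
  unfolding is_subspace_def
proof (intro conjI ballI allI)
  show "{s \<cdot>\<^sub>v v + t \<cdot>\<^sub>v u | s t. True} \<subseteq> carrier_vec n" using v u by auto
  have "0\<^sub>v n = 0 \<cdot>\<^sub>v v + 0 \<cdot>\<^sub>v u" by (rule eq_vecI) (use v u in simp_all)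
  then show "0\<^sub>v n \<in> {s \<cdot>\<^sub>v v + t \<cdot>\<^sub>v u | s t. True}" by blast
next
  fix a b assume "a \<in> {s \<cdot>\<^sub>v v + t \<cdot>\<^sub>v u | s t. True}" "b \<in> {s \<cdot>\<^sub>v v + t \<cdot>\<^sub>v u | s t. True}"
  then obtain s1 t1 s2 t2 where ab: "a = s1 \<cdot>\<^sub>v v + t1 \<cdot>\<^sub>v u" "b = s2 \<cdot>\<^sub>v v + t2 \<cdot>\<^sub>v u" by blast
  have "a + b = (s1 + s2) \<cdot>\<^sub>v v + (t1 + t2) \<cdot>\<^sub>v u"
    unfolding ab by (rule eq_vecI) (use v u in \<open>simp_all add: algebra_simps\<close>)
  then show "a + b \<in> {s \<cdot>\<^sub>v v + t \<cdot>\<^sub>v u | s t. True}" by blast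
next
  fix c a assume "a \<in> {s \<cdot>\<^sub>v v + t \<cdot>\<^sub>v u | s t. True}"
  then obtain s1 t1 where ab: "a = s1 \<cdot>\<^sub>v v + t1 \<cdot>\<^sub>v u" by blast
  have "c \<cdot>\<^sub>v a = (c * s1) \<cdot>\<^sub>v v + (c * t1) \<cdot>\<^sub>v u"
    unfolding ab by (rule eq_vecI) (use v u in \<open>simp_all add: algebra_simps\<close>)
  then show "c \<cdot>\<^sub>v a \<in> {s \<cdot>\<^sub>v v + t \<cdot>\<^sub>v u | s t. True}" by blast
qed

lemma span2_invariant:
  fixes A :: "'b::field mat"
  assumes A: "A \<in> carrier_mat n n" and v: "v \<in> carrier_vec n" and u: "u \<in> carrier_vec n"
    and Av: "A *\<^sub>v v = a1 \<cdot>\<^sub>v v + a2 \<cdot>\<^sub>v u" and Au: "A *\<^sub>v u = b1 \<cdot>\<^sub>v v + b2 \<cdot>\<^sub>v u"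
  shows "\<forall>w\<in>{s \<cdot>\<^sub>v v + t \<cdot>\<^sub>v u | s t. True}. A *\<^sub>v w \<in> {s \<cdot>\<^sub>v v + t \<cdot>\<^sub>v u | s t. True}"
proof
  fix w assume "w \<in> {s \<cdot>\<^sub>v v + t \<cdot>\<^sub>v u | s t. True}"
  then obtain s t where w: "w = s \<cdot>\<^sub>v v + t \<cdot>\<^sub>v u" by blast
  have "A *\<^sub>v w = s \<cdot>\<^sub>v (A *\<^sub>v v) + t \<cdot>\<^sub>v (A *\<^sub>v u)"
    unfolding w using A v u mult_mat_vec[OF A v, of s] mult_mat_vec[OF A u, of t]
    by (simp add: mult_add_distrib_mat_vec[where nr=n and nc=n])
  also have "\<dots> = (s * a1 + t * b1) \<cdot>\<^sub>v v + (s * a2 + t * b2) \<cdot>\<^sub>v u"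
    unfolding Av Au by (rule eq_vecI) (use v u in \<open>simp_all add: algebra_simps\<close>)
  finally show "A *\<^sub>v w \<in> {s \<cdot>\<^sub>v v + t \<cdot>\<^sub>v u | s t. True}" by blast
qed

lemma span2_proper:
  fixes v u :: "'b::field vec"
  assumes n: "n \<ge> 3" and v: "v \<in> carrier_vec n" and u: "u \<in> carrier_vec n"
  shows "{s \<cdot>\<^sub>v v + t \<cdot>\<^sub>v u | s t. True} \<noteq> carrier_vec n"
proof
  assume eq: "{s \<cdot>\<^sub>v v + t \<cdot>\<^sub>v u | s t. True} = carrier_vec n"
  have comp: "\<exists>s t. \<forall>i<n. (if i = k then 1 else 0) = s * v $ i + t * u $ i" if k: "k < n" for k
  proof -
    have "unit_vec n k \<in> {s \<cdot>\<^sub>v v + t \<cdot>\<^sub>v u | s t. True}" using eq by simp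
    then obtain s t where st: "unit_vec n k = s \<cdot>\<^sub>v v + t \<cdot>\<^sub>v u" by blast
    have "(if i = k then 1 else 0) = s * v $ i + t * u $ i" if i: "i < n" for i
    proof -
      have "unit_vec n k $ i = (s \<cdot>\<^sub>v v + t \<cdot>\<^sub>v u) $ i" using st by simp
      then show ?thesis using i k v u by simp
    qed
    then show ?thesis by blast
  qed
  obtain s0 t0 where h0: "\<forall>i<n. (if i = 0 then 1 else 0) = s0 * v $ i + t0 * u $ i" using comp[of 0] n by auto
  obtain s1 t1 where h1: "\<forall>i<n. (if i = 1 then 1 else 0) = s1 * v $ i + t1 * u $ i" using comp[of 1] n by auto
  obtain s2 t2 where h2: "\<forall>i<n. (if i = 2 then 1 else 0) = s2 * v $ i + t2 * u $ i" using comp[of 2] n by auto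
  have i: "0 < n" "1 < n" "2 < n" using n by auto
  show False
    apply (rule rank_alg[of s0 "v $ 0" t0 "u $ 0" "v $ 1" "u $ 1" "v $ 2" "u $ 2" s1 t1 s2 t2])
    using h0[rule_format, OF i(1)] h0[rule_format, OF i(2)] h0[rule_format, OF i(3)]
      h1[rule_format, OF i(1)] h1[rule_format, OF i(2)] h1[rule_format, OF i(3)]
      h2[rule_format, OF i(1)] h2[rule_format, OF i(2)] h2[rule_format, OF i(3)]
    by simp_all
qed


lemma gen_ok:
  fixes g :: "'a::field mat" and W :: "'a alg_closure vec set"
  assumes g: "g \<in> carrier_mat n n" and inv: "invertible_mat g"
    and gg: "g * g = a \<cdot>\<^sub>m g + b \<cdot>\<^sub>m 1\<^sub>m n" and b: "b \<noteq> 0"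
    and sub: "is_subspace n W" and invW: "\<forall>w\<in>W. map_mat to_ac g *\<^sub>v w \<in> W"
  shows "g \<in> carrier_mat n n \<and> (\<exists>C\<in>carrier_mat n n. map_mat to_ac g * C = 1\<^sub>m n \<and>
       C * map_mat to_ac g = 1\<^sub>m n \<and> (\<forall>w\<in>W. map_mat to_ac g *\<^sub>v w \<in> W) \<and> (\<forall>w\<in>W. C *\<^sub>v w \<in> W))"
proof -
  obtain B where B: "B \<in> carrier_mat n n" "g * B = 1\<^sub>m n" "B * g = 1\<^sub>m n" using inv_obtain[OF g inv] by blast
  have xc: "map_mat to_ac g \<in> carrier_mat n n" and Cc: "map_mat to_ac B \<in> carrier_mat n n" using g B by simp_all
  have 1: "map_mat to_ac g * map_mat to_ac B = 1\<^sub>m n"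
    using to_ac_hom.mat_hom_mult[OF g B(1)] B(2) to_ac_hom.mat_hom_one by metis
  have 2: "map_mat to_ac B * map_mat to_ac g = 1\<^sub>m n"
    using to_ac_hom.mat_hom_mult[OF B(1) g] B(3) to_ac_hom.mat_hom_one by metis
  have 3: "\<forall>w\<in>W. map_mat to_ac B *\<^sub>v w \<in> W"
  proof
    fix w assume "w \<in> W"
    show "map_mat to_ac B *\<^sub>v w \<in> W"
      by (rule inv_invariant[OF xc Cc 2 _ map_quad_vec[OF g gg] sub invW \<open>w \<in> W\<close>]) (use b in simp_all)
  qed
  show ?thesis using g Cc 1 2 3 invW by blast
qed

theorem mainTheorem11:
  fixes g1 g2 :: "'a::field mat" and n :: nat
  assumes "n \<ge> 4"
    and "g1 \<in> carrier_mat n n" and "invertible_mat g1"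
    and "g2 \<in> carrier_mat n n" and "invertible_mat g2"
    and "degree (minimal_poly n g1) = 2"
    and "degree (minimal_poly n g2) = 2"
  shows "\<not> acts_absolutely_irreducibly n (gen_group n {g1, g2})"
proof
  assume "acts_absolutely_irreducibly n (gen_group n {g1, g2})"
  then have irr: "acts_irreducibly n (map_mat to_ac ` gen_group n {g1, g2})"
    unfolding acts_absolutely_irreducibly_def .
  obtain a1 b1 where b1: "b1 \<noteq> 0" "g1 * g1 = a1 \<cdot>\<^sub>m g1 + b1 \<cdot>\<^sub>m 1\<^sub>m n"
    using quad_rel[OF assms(2,3,6)] by blast
  obtain a2 b2 where b2: "b2 \<noteq> 0" "g2 * g2 = a2 \<cdot>\<^sub>m g2 + b2 \<cdot>\<^sub>m 1\<^sub>m n"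
    using quad_rel[OF assms(4,5,7)] by blast
  define x where "x = map_mat to_ac g1"
  define y where "y = map_mat to_ac g2"
  have xc: "x \<in> carrier_mat n n" and yc: "y \<in> carrier_mat n n" unfolding x_def y_def using assms by simp_all
  have Qx: "x *\<^sub>v (x *\<^sub>v w) = to_ac a1 \<cdot>\<^sub>v (x *\<^sub>v w) + to_ac b1 \<cdot>\<^sub>v w" if "w \<in> carrier_vec n" for w
    unfolding x_def by (rule map_quad_vec[OF assms(2) b1(2) that])
  have Qy: "y *\<^sub>v (y *\<^sub>v w) = to_ac a2 \<cdot>\<^sub>v (y *\<^sub>v w) + to_ac b2 \<cdot>\<^sub>v w" if "w \<in> carrier_vec n" for w
    unfolding y_def by (rule map_quad_vec[OF assms(4) b2(2) that])
  have n0: "n > 0" using assms(1) by simp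
  obtain v l c1 c2 where v: "v \<in> carrier_vec n" "v \<noteq> 0\<^sub>v n" "x *\<^sub>v v = l \<cdot>\<^sub>v v"
    "x *\<^sub>v (y *\<^sub>v v) = c1 \<cdot>\<^sub>v v + c2 \<cdot>\<^sub>v (y *\<^sub>v v)"
    using common_eigvec[OF xc yc n0 Qx Qy] by blast
  define u where "u = y *\<^sub>v v"
  have uc: "u \<in> carrier_vec n" unfolding u_def using yc v by simp
  define W where "W = {s \<cdot>\<^sub>v v + t \<cdot>\<^sub>v u | s t. True}"
  have sub: "is_subspace n W" unfolding W_def by (rule span2_subspace[OF v(1) uc])
  have xv: "x *\<^sub>v v = l \<cdot>\<^sub>v v + 0 \<cdot>\<^sub>v u" using v(3) by (intro eq_vecI) (use v uc xc in simp_all)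
  have xu: "x *\<^sub>v u = c1 \<cdot>\<^sub>v v + c2 \<cdot>\<^sub>v u" using v(4) unfolding u_def .
  have yv: "y *\<^sub>v v = 0 \<cdot>\<^sub>v v + 1 \<cdot>\<^sub>v u" unfolding u_def by (intro eq_vecI) (use v yc in simp_all)
  have yu: "y *\<^sub>v u = to_ac b2 \<cdot>\<^sub>v v + to_ac a2 \<cdot>\<^sub>v u"
    unfolding u_def Qy[OF v(1)] by (intro eq_vecI) (use v yc in \<open>simp_all add: add.commute\<close>)
  have invx: "\<forall>w\<in>W. x *\<^sub>v w \<in> W" unfolding W_def by (rule span2_invariant[OF xc v(1) uc xv xu])
  have invy: "\<forall>w\<in>W. y *\<^sub>v w \<in> W" unfolding W_def by (rule span2_invariant[OF yc v(1) uc yv yu])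
  have gens: "g \<in> carrier_mat n n \<and> (\<exists>C\<in>carrier_mat n n. map_mat to_ac g * C = 1\<^sub>m n \<and>
       C * map_mat to_ac g = 1\<^sub>m n \<and> (\<forall>w\<in>W. map_mat to_ac g *\<^sub>v w \<in> W) \<and> (\<forall>w\<in>W. C *\<^sub>v w \<in> W))"
    if "g \<in> {g1, g2}" for g
  proof -
    from that have "g = g1 \<or> g = g2" by simp
    then show ?thesis
    proof
      assume "g = g1"
      then show ?thesis using gen_ok[OF assms(2,3) b1(2) b1(1) sub] invx unfolding x_def by simp
    next
      assume "g = g2"
      then show ?thesis using gen_ok[OF assms(4,5) b2(2) b2(1) sub] invy unfolding y_def by simp
    qed
  qed
  have "\<forall>G\<in>map_mat to_ac ` gen_group n {g1, g2}. \<forall>w\<in>W. G *\<^sub>v w \<in> W"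
  proof
    fix G assume "G \<in> map_mat to_ac ` gen_group n {g1, g2}"
    then obtain A where A: "A \<in> gen_group n {g1, g2}" "G = map_mat to_ac A" by blast
    show "\<forall>w\<in>W. G *\<^sub>v w \<in> W" using group_invariant[OF sub gens A(1)] A(2) by blast
  qed
  then have "W = {0\<^sub>v n} \<or> W = carrier_vec n" using irr sub unfolding acts_irreducibly_def by blast
  moreover have "W \<noteq> {0\<^sub>v n}"
  proof
    assume "W = {0\<^sub>v n}"
    moreover have "v = 1 \<cdot>\<^sub>v v + 0 \<cdot>\<^sub>v u" by (intro eq_vecI) (use v uc in simp_all)
    then have "v \<in> W" unfolding W_def by blast
    ultimately show False using v(2) by simp
  qed
  moreover have "W \<noteq> carrier_vec n" unfolding W_def by (rule span2_proper[OF _ v(1) uc]) (use assms(1) in simp)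
  ultimately show False by blast
qed

end
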